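(* Every ideal of a nilpotent-free Lie algebra is nilpotent-free (as a Lie algebra in its own right).
   Context: All algebras are finite-dimensional over an infinite field $K$. An element $x$ of a Lie algebra $L$ is nilpotent if $\operatorname{ad}x$ (acting on $L$) is a nilpotent linear map. $L$ is called nilpotent-free if every nilpotent element of $L$ lies in the center of $L$. *)

theory Defs
  imports Complex_Main
begin

definition lie_algebra ::
  "('k::field \<Rightarrow> 'v::ab_group_add \<Rightarrow> 'v) \<Rightarrow> ('v \<Rightarrow> 'v \<Rightarrow> 'v) \<Rightarrow> 'v set \<Rightarrow> bool" where
  "lie_algebra scale br L \<longleftrightarrow>
     vector_space scale \<and> module.subspace scale L \<and>
     (\<exists>B. finite B \<and> B \<subseteq> L \<and> module.span scale B = L) \<and>
     (\<forall>x\<in>L. \<forall>y\<in>L. br x y \<in> L) \<and>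
     (\<forall>x\<in>L. \<forall>y\<in>L. \<forall>z\<in>L. br (x + y) z = br x z + br y z \<and> br x (y + z) = br x y + br x z) \<and>
     (\<forall>c. \<forall>x\<in>L. \<forall>y\<in>L. br (scale c x) y = scale c (br x y) \<and> br x (scale c y) = scale c (br x y)) \<and>
     (\<forall>x\<in>L. br x x = 0) \<and>
     (\<forall>x\<in>L. \<forall>y\<in>L. \<forall>z\<in>L. br x (br y z) + br y (br z x) + br z (br x y) = 0)"

definition lie_ideal ::
  "('k::field \<Rightarrow> 'v::ab_group_add \<Rightarrow> 'v) \<Rightarrow> ('v \<Rightarrow> 'v \<Rightarrow> 'v) \<Rightarrow> 'v set \<Rightarrow> 'v set \<Rightarrow> bool" where
  "lie_ideal scale br L I \<longleftrightarrow>
     module.subspace scale I \<and> I \<subseteq> L \<and> (\<forall>x\<in>L. \<forall>y\<in>I. br x y \<in> I)"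

definition ad_nilpotent :: "('v::ab_group_add \<Rightarrow> 'v \<Rightarrow> 'v) \<Rightarrow> 'v set \<Rightarrow> 'v \<Rightarrow> bool" where
  "ad_nilpotent br L x \<longleftrightarrow> (\<exists>n. \<forall>y\<in>L. (br x ^^ n) y = 0)"

definition lie_center :: "('v::ab_group_add \<Rightarrow> 'v \<Rightarrow> 'v) \<Rightarrow> 'v set \<Rightarrow> 'v set" where
  "lie_center br L = {x\<in>L. \<forall>y\<in>L. br x y = 0}"

definition nilpotent_free :: "('v::ab_group_add \<Rightarrow> 'v \<Rightarrow> 'v) \<Rightarrow> 'v set \<Rightarrow> bool" where
  "nilpotent_free br L \<longleftrightarrow> (\<forall>x\<in>L. ad_nilpotent br L x \<longrightarrow> x \<in> lie_center br L)"

end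

theory Submission
  imports Defs
begin

theorem lemma8:
  fixes scale :: "'k::field \<Rightarrow> 'v::ab_group_add \<Rightarrow> 'v"
    and br :: "'v \<Rightarrow> 'v \<Rightarrow> 'v"
    and L I :: "'v set"
  assumes "infinite (UNIV :: 'k set)"
    and "lie_algebra scale br L"
    and "nilpotent_free br L"
    and "lie_ideal scale br L I"
  shows "lie_algebra scale br I \<and> nilpotent_free br I"
proof
  note LA = assms(2)[unfolded lie_algebra_def]
  note vs = LA[THEN conjunct1]
  note fin = LA[THEN conjunct2, THEN conjunct2, THEN conjunct1]
  note A = LA[THEN conjunct2, THEN conjunct2, THEN conjunct2, THEN conjunct2, THEN conjunct1]
  note Bc = LA[THEN conjunct2, THEN conjunct2, THEN conjunct2, THEN conjunct2, THEN conjunct2, THEN conjunct1]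
  note C = LA[THEN conjunct2, THEN conjunct2, THEN conjunct2, THEN conjunct2, THEN conjunct2, THEN conjunct2, THEN conjunct1]
  note D = LA[THEN conjunct2, THEN conjunct2, THEN conjunct2, THEN conjunct2, THEN conjunct2, THEN conjunct2, THEN conjunct2]
  note LI = assms(4)[unfolded lie_ideal_def]
  note subI = LI[THEN conjunct1]
  note IL = LI[THEN conjunct2, THEN conjunct1]
  note id = LI[THEN conjunct2, THEN conjunct2]
  interpret V: vector_space scale by (rule vs)
  obtain B0 where B0: "finite B0" "B0 \<subseteq> L" "V.span B0 = L" using fin by blast
  obtain B where B: "B \<subseteq> I" "V.independent B" "I \<subseteq> V.span B"
    using V.maximal_independent_subset by blast
  have "B \<subseteq> V.span B0" using B(1) IL unfolding B0(3) by (rule subset_trans)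
  then have "finite B" by (rule V.independent_span_bound[OF B0(1) B(2), THEN conjunct1])
  moreover have "V.span B = I" using V.span_subspace[OF B(1) B(3) subI] .
  ultimately have finI: "\<exists>B. finite B \<and> B \<subseteq> I \<and> V.span B = I" using B(1) by blast
  show "lie_algebra scale br I"
    unfolding lie_algebra_def
  proof (intro conjI)
    show "\<forall>x\<in>I. \<forall>y\<in>I. br x y \<in> I" using id IL by blast
    show "\<forall>x\<in>I. \<forall>y\<in>I. \<forall>z\<in>I. br (x + y) z = br x z + br y z \<and> br x (y + z) = br x y + br x z"
      proof (intro ballI)
      fix x y z assume "x \<in> I" "y \<in> I" "z \<in> I"
      then have "x \<in> L" "y \<in> L" "z \<in> L" using IL by (auto dest: subsetD)
      then show "br (x + y) z = br x z + br y z \<and> br x (y + z) = br x y + br x z" by (rule A[rule_format])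
    qed
    show "\<forall>c. \<forall>x\<in>I. \<forall>y\<in>I. br (scale c x) y = scale c (br x y) \<and> br x (scale c y) = scale c (br x y)"
      proof (intro allI ballI)
      fix c x y assume "x \<in> I" "y \<in> I"
      then have "x \<in> L" "y \<in> L" using IL by (auto dest: subsetD)
      then show "br (scale c x) y = scale c (br x y) \<and> br x (scale c y) = scale c (br x y)" by (rule Bc[rule_format])
    qed
    show "\<forall>x\<in>I. br x x = 0" using C IL by (auto dest: subsetD)
    show "\<forall>x\<in>I. \<forall>y\<in>I. \<forall>z\<in>I. br x (br y z) + br y (br z x) + br z (br x y) = 0"
      proof (intro ballI)
      fix x y z assume "x \<in> I" "y \<in> I" "z \<in> I"
      then have "x \<in> L" "y \<in> L" "z \<in> L" using IL by (auto dest: subsetD)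
      then show "br x (br y z) + br y (br z x) + br z (br x y) = 0" by (rule D[rule_format])
    qed
    show "vector_space scale" by (rule vs)
    show "module.subspace scale I" by (rule subI)
    show "\<exists>B. finite B \<and> B \<subseteq> I \<and> module.span scale B = I" by (rule finI)
  qed
  show "nilpotent_free br I"
    unfolding nilpotent_free_def
  proof (intro ballI impI)
    fix x assume xI: "x \<in> I" and nil: "ad_nilpotent br I x"
    obtain n where n: "\<forall>y\<in>I. (br x ^^ n) y = 0" using nil[unfolded ad_nilpotent_def] by (rule exE)
    have "\<forall>y\<in>L. (br x ^^ Suc n) y = 0"
    proof
      fix y assume "y \<in> L"
      note yL = this
      have xL: "x \<in> L" using xI IL by (rule subsetD[rotated])
      have "br y x \<in> I" using id yL xI by simp
      then have neg: "- br y x \<in> I" by (rule V.subspace_neg[OF subI])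
      have xyL: "x + y \<in> L" using LA xL yL unfolding V.subspace_def by (simp add: lie_algebra_def V.subspace_add)
      have "0 = br (x + y) (x + y)" using C xyL by simp
      also have "\<dots> = br x (x + y) + br y (x + y)" using A xL yL xyL by simp
      also have "\<dots> = (br x x + br x y) + (br y x + br y y)" using A xL yL by simp
      also have "\<dots> = br x y + br y x" using C xL yL by simp
      finally have "br x y = - br y x" by (simp add: eq_neg_iff_add_eq_0)
      then have "br x y \<in> I" using neg by simp
      moreover have "(br x ^^ Suc n) y = (br x ^^ n) (br x y)" by (simp only: funpow_Suc_right comp_apply)
      ultimately show "(br x ^^ Suc n) y = 0" using n by (simp only:)
    qed
    then have "ad_nilpotent br L x" unfolding ad_nilpotent_def by (rule exI)
    moreover have "x \<in> L" using xI IL by (rule subsetD[rotated])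
    ultimately have "x \<in> lie_center br L" using assms(3) unfolding nilpotent_free_def by simp
    then show "x \<in> lie_center br I" using xI IL unfolding lie_center_def by auto
  qed
qed

end
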